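(* Consider a mutation operator on $\{0,1\}^n$ that is either standard bit mutation with mutation probability $p$ satisfying $p=O(1/n)$ and $p\ge n^{-O(1)}$, or the heavy-tailed mutation operator with a constant $\beta>1$, and any fitness function $f$. Then there is a constant $\gamma>1$ such that $p_x^-\le\gamma^{-1}$ for all non-optimal search points $x$. In addition, $p_x^+\ge n^{-O(n)}$ for all non-optimal search points $x$.
   Context: Standard bit mutation with probability $p$ flips each bit independently with probability $p$. Heavy-tailed mutation with $\beta>1$ draws $\chi\in\{1,\dots,n/2\}$ with $\Pr[\chi=i]=i^{-\beta}/\sum_{j=1}^{n/2}j^{-\beta}$ and then performs standard bit mutation with probability $\chi/n$. For a search point $x$, $p_x^+$ (resp. $p_x^-$) is the probability that one application of the mutation operator to $x$ produces a search point of strictly larger (resp. strictly smaller) fitness than $x$. A search point is optimal if it maximises $f$. Asymptotics are with respect to $n\to\infty$. *)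

theory Defs
  imports Complex_Main "HOL-Library.Landau_Symbols"
begin

definition bitstrings :: "nat \<Rightarrow> bool list set" where
  "bitstrings n = {xs. length xs = n}"

definition hamming :: "bool list \<Rightarrow> bool list \<Rightarrow> nat" where
  "hamming x y = card {i. i < length x \<and> x ! i \<noteq> y ! i}"

definition sbm_prob :: "real \<Rightarrow> nat \<Rightarrow> bool list \<Rightarrow> bool list \<Rightarrow> real" where
  "sbm_prob p n x y = p ^ hamming x y * (1 - p) ^ (n - hamming x y)"

definition heavy_prob :: "real \<Rightarrow> nat \<Rightarrow> bool list \<Rightarrow> bool list \<Rightarrow> real" where
  "heavy_prob \<beta> n x y =
     (\<Sum>i = 1..n div 2. (real i powr (-\<beta>) / (\<Sum>j = 1..n div 2. real j powr (-\<beta>)))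
                         * sbm_prob (real i / real n) n x y)"

text \<open>A mutation operator is given by its transition probabilities K n x y.\<close>
definition p_plus :: "(nat \<Rightarrow> bool list \<Rightarrow> bool list \<Rightarrow> real) \<Rightarrow> nat \<Rightarrow> (bool list \<Rightarrow> real) \<Rightarrow> bool list \<Rightarrow> real" where
  "p_plus K n f x = (\<Sum>y \<in> {y \<in> bitstrings n. f y > f x}. K n x y)"

definition p_minus :: "(nat \<Rightarrow> bool list \<Rightarrow> bool list \<Rightarrow> real) \<Rightarrow> nat \<Rightarrow> (bool list \<Rightarrow> real) \<Rightarrow> bool list \<Rightarrow> real" where
  "p_minus K n f x = (\<Sum>y \<in> {y \<in> bitstrings n. f y < f x}. K n x y)"

definition optimal :: "nat \<Rightarrow> (bool list \<Rightarrow> real) \<Rightarrow> bool list \<Rightarrow> bool" where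
  "optimal n f x \<longleftrightarrow> x \<in> bitstrings n \<and> (\<forall>y \<in> bitstrings n. f y \<le> f x)"

end

theory Submission
  imports Defs "HOL-Analysis.Analysis"
begin

lemma bitstrings_0: "bitstrings 0 = {[]}" by (auto simp: bitstrings_def)

lemma bitstrings_Suc: "bitstrings (Suc n) = Cons True ` bitstrings n \<union> Cons False ` bitstrings n"
proof
  show "bitstrings (Suc n) \<subseteq> Cons True ` bitstrings n \<union> Cons False ` bitstrings n"
  proof
    fix xs assume "xs \<in> bitstrings (Suc n)"
    then obtain a ys where "xs = a # ys" "length ys = n" by (cases xs) (auto simp: bitstrings_def)
    then show "xs \<in> Cons True ` bitstrings n \<union> Cons False ` bitstrings n"
      by (cases a) (auto simp: bitstrings_def)
  qed
qed (auto simp: bitstrings_def)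

lemma finite_bitstrings: "finite (bitstrings n)"
  by (induction n) (auto simp: bitstrings_0 bitstrings_Suc)

lemma hamming_Cons: "hamming (a # x) (b # y) = (if a \<noteq> b then 1 else 0) + hamming x y"
proof -
  have "{i. i < length (a # x) \<and> (a # x) ! i \<noteq> (b # y) ! i}
        = (if a \<noteq> b then {0} else {}) \<union> Suc ` {i. i < length x \<and> x ! i \<noteq> y ! i}"
  proof (rule set_eqI)
    fix i show "i \<in> {i. i < length (a # x) \<and> (a # x) ! i \<noteq> (b # y) ! i} \<longleftrightarrow>
      i \<in> (if a \<noteq> b then {0} else {}) \<union> Suc ` {i. i < length x \<and> x ! i \<noteq> y ! i}"
      by (cases i) auto
  qed
  then show ?thesis unfolding hamming_def
    by (simp add: card_image)
qed

lemma hamming_le: "hamming x y \<le> length x"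
proof -
  have "{i. i < length x \<and> x ! i \<noteq> y ! i} \<subseteq> {..<length x}" by auto
  then show ?thesis unfolding hamming_def by (metis card_lessThan card_mono finite_lessThan)
qed

lemma hamming_self: "hamming x x = 0" by (simp add: hamming_def)

lemma sbm_sum: "length x = n \<Longrightarrow> (\<Sum>y\<in>bitstrings n. sbm_prob p n x y) = 1"
proof (induction x arbitrary: n)
  case Nil then show ?case by (simp add: bitstrings_0 sbm_prob_def hamming_def)
next
  case (Cons a x)
  then obtain m where m: "n = Suc m" "length x = m" by auto
  have IH: "(\<Sum>y\<in>bitstrings m. sbm_prob p m x y) = 1" using Cons m by simp
  have disj: "Cons True ` bitstrings m \<inter> Cons False ` bitstrings m = {}" by auto
  have eqs: "sbm_prob p (Suc m) (a # x) (c # y) = (if a \<noteq> c then p else 1 - p) * sbm_prob p m x y"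
    if "y \<in> bitstrings m" for c y
  proof -
    have "hamming x y \<le> m" using hamming_le[of x y] m by simp
    then have "Suc m - hamming x y = Suc (m - hamming x y)" by simp
    then show ?thesis unfolding sbm_prob_def hamming_Cons by auto
  qed
  have "(\<Sum>y\<in>bitstrings n. sbm_prob p n (a # x) y)
       = (\<Sum>y\<in>Cons True ` bitstrings m. sbm_prob p (Suc m) (a # x) y)
         + (\<Sum>y\<in>Cons False ` bitstrings m. sbm_prob p (Suc m) (a # x) y)"
    unfolding m bitstrings_Suc by (rule sum.union_disjoint) (auto simp: finite_bitstrings)
  also have "\<dots> = (\<Sum>y\<in>bitstrings m. sbm_prob p (Suc m) (a # x) (True # y))
         + (\<Sum>y\<in>bitstrings m. sbm_prob p (Suc m) (a # x) (False # y))"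
    by (simp add: sum.reindex)
  also have "\<dots> = (if a \<noteq> True then p else 1 - p) * (\<Sum>y\<in>bitstrings m. sbm_prob p m x y)
         + (if a \<noteq> False then p else 1 - p) * (\<Sum>y\<in>bitstrings m. sbm_prob p m x y)"
    by (simp add: sum_distrib_left eqs del: One_nat_def)
  also have "\<dots> = 1" using IH by (cases a) auto
  finally show ?case .
qed

lemma sbm_nonneg: "0 \<le> p \<Longrightarrow> p \<le> 1 \<Longrightarrow> 0 \<le> sbm_prob p n x y"
  by (simp add: sbm_prob_def)

lemma generic:
  assumes x: "x \<in> bitstrings n" and no: "\<not> optimal n f x"
    and nn: "\<forall>y\<in>bitstrings n. 0 \<le> K n x y" and s1: "(\<Sum>y\<in>bitstrings n. K n x y) = 1"
    and c: "K n x x \<ge> c" and L: "\<forall>y\<in>bitstrings n. K n x y \<ge> L"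
  shows "p_minus K n f x \<le> 1 - c \<and> p_plus K n f x \<ge> L"
proof
  obtain y where y: "y \<in> bitstrings n" "f y > f x" using no x unfolding optimal_def by force
  have "K n x y \<le> p_plus K n f x" unfolding p_plus_def
    by (rule member_le_sum) (use y nn finite_bitstrings in auto)
  then show "p_plus K n f x \<ge> L" using L y by force
  let ?A = "{y \<in> bitstrings n. f y < f x}"
  have "p_minus K n f x + K n x x = sum (K n x) (insert x ?A)"
    unfolding p_minus_def by (subst sum.insert) (auto simp: finite_bitstrings)
  also have "\<dots> \<le> sum (K n x) (bitstrings n)"
    by (rule sum_mono2) (use x nn finite_bitstrings in auto)
  finally show "p_minus K n f x \<le> 1 - c" using s1 c by simp
qed


lemma one_minus_pow:
  fixes t :: real
  assumes "0 \<le> t" "t \<le> 1/2"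
  shows "exp (- 2 * t * real n) \<le> (1 - t) ^ n"
proof -
  have "- t - 2 * t\<^sup>2 \<le> ln (1 - t)" by (rule ln_one_minus_pos_lower_bound) (use assms in auto)
  moreover have "2 * t\<^sup>2 \<le> t" using assms mult_left_mono[of "2*t" 1 t] by (simp add: power2_eq_square)
  ultimately have "- 2 * t \<le> ln (1 - t)" by linarith
  then have "exp (- 2 * t) \<le> exp (ln (1 - t))" by simp
  then have "exp (- 2 * t) \<le> 1 - t" using assms by simp
  then have "exp (- 2 * t) ^ n \<le> (1 - t) ^ n" by (rule power_mono) simp
  moreover have "exp (- 2 * t * real n) = exp (- 2 * t) ^ n"
    by (metis exp_of_nat_mult mult.commute)
  ultimately show ?thesis by simp
qed

lemma sbm_lower:
  fixes t :: real
  assumes "0 \<le> t" "t \<le> 1/2" "length x = n"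
  shows "t ^ n * (1/2) ^ n \<le> sbm_prob t n x y"
proof -
  let ?h = "hamming x y"
  have h: "?h \<le> n" using hamming_le[of x y] assms by simp
  have 1: "t ^ n \<le> t ^ ?h" by (rule power_decreasing) (use assms h in auto)
  have "(1/2::real) ^ n \<le> (1 - t) ^ n" by (rule power_mono) (use assms in auto)
  also have "\<dots> \<le> (1 - t) ^ (n - ?h)" by (rule power_decreasing) (use assms in auto)
  finally have 2: "(1/2::real) ^ n \<le> (1 - t) ^ (n - ?h)" .
  show ?thesis unfolding sbm_prob_def
    by (rule mult_mono[OF 1 2]) (use assms in auto)
qed

lemma inv_pow_powr:
  assumes "n \<ge> 1"
  shows "(1 / real n) ^ k = real n powr (- real k)"
  using assms by (simp add: powr_minus powr_realpow power_one_over inverse_eq_divide)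

theorem lemma2p3:
  fixes K :: "nat \<Rightarrow> bool list \<Rightarrow> bool list \<Rightarrow> real"
  assumes "(\<exists>p :: nat \<Rightarrow> real.
              (\<forall>n. 0 \<le> p n \<and> p n \<le> 1) \<and>
              p \<in> O(\<lambda>n. 1 / real n) \<and>
              (\<exists>d. \<forall>\<^sub>F n in at_top. p n \<ge> real n powr (-d)) \<and>
              K = (\<lambda>n. sbm_prob (p n) n))
         \<or> (\<exists>\<beta> :: real. \<beta> > 1 \<and> K = heavy_prob \<beta>)"
  shows "\<exists>\<gamma> > 1. \<exists>C. \<forall>\<^sub>F n in at_top. \<forall>(f :: bool list \<Rightarrow> real) x.
           x \<in> bitstrings n \<and> \<not> optimal n f x \<longrightarrow>
             p_minus K n f x \<le> 1 / \<gamma> \<and> p_plus K n f x \<ge> real n powr (- C * real n)"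
  using assms
proof (elim disjE exE conjE)
  fix p d
  assume p01: "\<forall>n. 0 \<le> p n \<and> p n \<le> 1" and bo: "p \<in> O(\<lambda>n. 1 / real n)"
    and ev: "\<forall>\<^sub>F n in at_top. p n \<ge> real n powr (-d)" and K: "K = (\<lambda>n. sbm_prob (p n) n)"
  from bo obtain c where c: "c > 0" "\<forall>\<^sub>F n in at_top. norm (p n) \<le> c * norm (1 / real n)"
    by (elim landau_o.bigE)
  define c' where "c' = exp (- 2 * c)"
  define d' where "d' = max d 0 + 1"
  have c'01: "0 < c'" "c' < 1" using c(1) by (auto simp: c'_def)
  have ev2: "\<forall>\<^sub>F n in at_top. real n \<ge> 2 \<and> real n \<ge> 2 * c"
  proof -
    have "\<forall>\<^sub>F n in at_top. n \<ge> nat (ceiling (2 * c)) + 2" by (rule eventually_ge_at_top)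
    then show ?thesis
    proof eventually_elim
      case (elim n)
      have "2 * c \<le> real (nat (ceiling (2 * c)))" by linarith
      then show ?case using elim by linarith
    qed
  qed
  have "\<forall>\<^sub>F n in at_top. \<forall>(f :: bool list \<Rightarrow> real) x.
           x \<in> bitstrings n \<and> \<not> optimal n f x \<longrightarrow>
             p_minus K n f x \<le> 1 - c' \<and> p_plus K n f x \<ge> real n powr (- d' * real n)"
    using c(2) ev ev2
  proof eventually_elim
    case (elim n)
    define t where "t = p n"
    have n2: "real n \<ge> 2" "real n \<ge> 2 * c" using elim by auto
    have t0: "0 \<le> t" "t \<le> 1" using p01 by (auto simp: t_def)
    have tc: "t \<le> c / real n" using elim(1) t0 n2 by (simp add: t_def)
    have tn: "t * real n \<le> c" using tc n2 by (simp add: field_simps)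
    have "c / real n \<le> 1/2" using n2 by (simp add: field_simps)
    with tc have th: "t \<le> 1/2" by linarith
    have td: "t \<ge> real n powr (- d)" using elim(2) by (simp add: t_def)
    have Kxx: "K n x x \<ge> c'" if "x \<in> bitstrings n" for x
    proof -
      have "K n x x = (1 - t) ^ n" by (simp add: K t_def sbm_prob_def hamming_self)
      moreover have "exp (- 2 * t * real n) \<le> (1 - t) ^ n" by (rule one_minus_pow) (use t0 th in auto)
      moreover have "c' \<le> exp (- 2 * t * real n)" unfolding c'_def using tn by simp
      ultimately show ?thesis by linarith
    qed
    have KL: "K n x y \<ge> real n powr (- d' * real n)" if "x \<in> bitstrings n" for x y
    proof -
      have "real n powr (- max d 0) \<le> real n powr (- d)"
        by (rule powr_mono) (use n2 in auto)
      with td have tm: "real n powr (- max d 0) \<le> t" by linarith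
      have "(real n powr (- max d 0)) ^ n \<le> t ^ n" by (rule power_mono[OF tm]) simp
      moreover have "(real n powr (- max d 0)) ^ n = real n powr (- max d 0 * real n)"
        using n2 by (subst powr_power) (auto simp: mult.commute)
      ultimately have A: "real n powr (- max d 0 * real n) \<le> t ^ n" by simp
      have "(1 / real n) ^ n \<le> (1/2) ^ n" by (rule power_mono) (use n2 in auto)
      moreover have "(1 / real n) ^ n = real n powr (- real n)" by (rule inv_pow_powr) (use n2 in auto)
      ultimately have B: "real n powr (- real n) \<le> (1/2) ^ n" by simp
      have "real n powr (- d' * real n) = real n powr (- max d 0 * real n) * real n powr (- real n)"
        unfolding d'_def by (simp add: powr_add[symmetric] algebra_simps)
      also have "\<dots> \<le> t ^ n * (1/2) ^ n" by (rule mult_mono[OF A B]) (use t0 in auto)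
      also have "\<dots> \<le> K n x y" unfolding K t_def
        by (rule sbm_lower) (use t0 th that in \<open>auto simp: t_def bitstrings_def\<close>)
      finally show ?thesis .
    qed
    show ?case
    proof (intro allI impI)
      fix f x assume fx: "x \<in> bitstrings n \<and> \<not> optimal n f x"
      show "p_minus K n f x \<le> 1 - c' \<and> p_plus K n f x \<ge> real n powr (- d' * real n)"
      proof (rule generic)
        show "\<forall>y\<in>bitstrings n. 0 \<le> K n x y" using t0 by (auto simp: K t_def intro: sbm_nonneg)
        show "(\<Sum>y\<in>bitstrings n. K n x y) = 1" using fx sbm_sum[of x n "p n"] by (simp add: K bitstrings_def)
      qed (use fx Kxx KL in auto)
    qed
  qed
  note E = this
  have eq: "1 / (1 / (1 - c')) = 1 - c'" by simp
  show ?thesis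
  proof (rule exI[of _ "1 / (1 - c')"], rule conjI)
    show "1 / (1 - c') > 1" using c'01 by (simp add: field_simps)
  next
    show "\<exists>C. \<forall>\<^sub>F n in at_top. \<forall>(f :: bool list \<Rightarrow> real) x.
           x \<in> bitstrings n \<and> \<not> optimal n f x \<longrightarrow>
             p_minus K n f x \<le> 1 / (1 / (1 - c')) \<and> p_plus K n f x \<ge> real n powr (- C * real n)"
      unfolding eq by (rule exI[of _ "d'"]) (rule E)
  qed
next
  fix \<beta> :: real
  assume b1: "\<beta> > 1" and K: "K = heavy_prob \<beta>"
  let ?g = "\<lambda>j::nat. real j powr (- \<beta>)"
  define B where "B = suminf ?g"
  have summ: "summable ?g" using b1 by (subst summable_real_powr_iff) auto
  define S where "S = (\<lambda>n::nat. \<Sum>j = 1..n div 2. ?g j)"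
  have SB: "S n \<le> B" for n unfolding S_def B_def
    by (rule sum_le_suminf[OF summ]) auto
  have S1: "S n \<ge> 1" if "n \<ge> 2" for n
  proof -
    have "1 \<in> {1..n div 2}" using that by auto
    then have "?g 1 \<le> S n" unfolding S_def by (intro member_le_sum) auto
    then show ?thesis by simp
  qed
  have Sn: "S n \<le> real n" for n
  proof -
    have "S n \<le> (\<Sum>j = 1..n div 2. (1::real))" unfolding S_def
    proof (rule sum_mono)
      fix j assume "j \<in> {1..n div 2}"
      then have "1 \<le> real j powr \<beta>" using b1 by (intro ge_one_powr_ge_zero) auto
      then show "real j powr (- \<beta>) \<le> 1" by (auto simp add: powr_minus_divide divide_le_eq_1)
    qed
    also have "\<dots> \<le> real n" by simp
    finally show ?thesis .
  qed
  have B1: "B \<ge> 1" using S1[of 2] SB[of 2] by linarith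
  define c' where "c' = exp (- 2) / B"
  have e1: "exp (- 2 :: real) < 1" by simp
  have eB: "exp (- 2 :: real) < B" using e1 B1 by linarith
  have c'01: "0 < c'" "c' < 1" using B1 eB by (auto simp: c'_def field_simps)
  have "\<forall>\<^sub>F n in at_top. \<forall>(f :: bool list \<Rightarrow> real) x.
           x \<in> bitstrings n \<and> \<not> optimal n f x \<longrightarrow>
             p_minus K n f x \<le> 1 - c' \<and> p_plus K n f x \<ge> real n powr (- 3 * real n)"
    using eventually_ge_at_top[of "2::nat"]
  proof eventually_elim
    case (elim n)
    have n2: "real n \<ge> 2" using elim by simp
    have Spos: "S n > 0" using S1[OF elim] by simp
    define w where "w = (\<lambda>i::nat. ?g i / S n)"
    have Keq: "K n x y = (\<Sum>i = 1..n div 2. w i * sbm_prob (real i / real n) n x y)" for x y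
      by (simp add: K heavy_prob_def w_def S_def)
    have tnn: "0 \<le> real i / real n \<and> real i / real n \<le> 1" if "i \<in> {1..n div 2}" for i
      using that elim by (auto simp: field_simps)
    have termnn: "0 \<le> w i * sbm_prob (real i / real n) n x y" if "i \<in> {1..n div 2}" for i x y
    proof -
      have "0 \<le> sbm_prob (real i / real n) n x y" using tnn[OF that] by (intro sbm_nonneg) auto
      moreover have "0 \<le> w i" using Spos by (simp add: w_def)
      ultimately show ?thesis by simp
    qed
    have first: "w 1 * sbm_prob (1 / real n) n x y \<le> K n x y" for x y
    proof -
      have "1 \<in> {1..n div 2}" using elim by auto
      then have "w 1 * sbm_prob (real 1 / real n) n x y \<le> K n x y"
        unfolding Keq by (intro member_le_sum termnn) auto
      then show ?thesis by simp
    qed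
    have w1: "w 1 = 1 / S n" by (simp add: w_def)
    have t12: "1 / real n \<le> 1/2" using n2 by (simp add: field_simps)
    have Kxx: "K n x x \<ge> c'" for x
    proof -
      have "exp (- 2 * (1 / real n) * real n) \<le> (1 - 1 / real n) ^ n"
        by (rule one_minus_pow) (use t12 in auto)
      then have e: "exp (- 2) \<le> sbm_prob (1 / real n) n x x"
        using n2 by (simp add: sbm_prob_def hamming_self)
      have "c' \<le> exp (-2) / S n" unfolding c'_def
        by (rule divide_left_mono) (use SB[of n] Spos B1 in auto)
      also have "\<dots> \<le> sbm_prob (1 / real n) n x x / S n"
        by (rule divide_right_mono[OF e]) (use Spos in auto)
      also have "\<dots> = w 1 * sbm_prob (1 / real n) n x x" by (simp add: w_def)
      also have "\<dots> \<le> K n x x" by (rule first)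
      finally show ?thesis .
    qed
    have KL: "K n x y \<ge> real n powr (- 3 * real n)" if "x \<in> bitstrings n" for x y
    proof -
      have s: "(1 / real n) ^ n * (1/2) ^ n \<le> sbm_prob (1 / real n) n x y"
        by (rule sbm_lower) (use t12 that in \<open>auto simp: bitstrings_def\<close>)
      have h: "(1 / real n) ^ n \<le> (1/2) ^ n" by (rule power_mono) (use n2 in auto)
      have i1: "1 / real n \<le> 1 / S n" using Sn[of n] Spos by (simp add: field_simps)
      have "real n powr (- 3 * real n) = (1 / real n) ^ (3 * n)"
        using inv_pow_powr[of n "3 * n"] elim by simp
      also have "\<dots> \<le> (1 / real n) ^ (2 * n + 1)"
        by (rule power_decreasing) (use n2 elim in auto)
      also have "\<dots> = (1 / real n) * ((1 / real n) ^ n * (1 / real n) ^ n)"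
        by (simp add: power_add mult_2)
      also have "\<dots> \<le> (1 / S n) * ((1 / real n) ^ n * (1/2) ^ n)"
        by (intro mult_mono i1 h mult_left_mono) (use n2 Spos in auto)
      also have "\<dots> \<le> (1 / S n) * sbm_prob (1 / real n) n x y"
        by (rule mult_left_mono[OF s]) (use Spos in auto)
      also have "\<dots> \<le> K n x y" using first[of x y] by (simp add: w_def)
      finally show ?thesis .
    qed
    have ws: "(\<Sum>i = 1..n div 2. w i) = 1"
      using Spos by (simp add: w_def S_def sum_divide_distrib[symmetric])
    show ?case
    proof (intro allI impI)
      fix f x assume fx: "x \<in> bitstrings n \<and> \<not> optimal n f x"
      show "p_minus K n f x \<le> 1 - c' \<and> p_plus K n f x \<ge> real n powr (- 3 * real n)"
      proof (rule generic)
        show "\<forall>y\<in>bitstrings n. 0 \<le> K n x y"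
          unfolding Keq by (auto intro!: sum_nonneg termnn)
        have "(\<Sum>y\<in>bitstrings n. K n x y)
            = (\<Sum>i = 1..n div 2. w i * (\<Sum>y\<in>bitstrings n. sbm_prob (real i / real n) n x y))"
          unfolding Keq by (simp add: sum.swap[of _ "bitstrings n"] sum_distrib_left)
        also have "\<dots> = (\<Sum>i = 1..n div 2. w i)"
          using fx sbm_sum[of x n] by (simp add: bitstrings_def)
        finally show "(\<Sum>y\<in>bitstrings n. K n x y) = 1" using ws by simp
      qed (use fx Kxx KL in auto)
    qed
  qed
  note E = this
  have eq: "1 / (1 / (1 - c')) = 1 - c'" by simp
  show ?thesis
  proof (rule exI[of _ "1 / (1 - c')"], rule conjI)
    show "1 / (1 - c') > 1" using c'01 by (simp add: field_simps)
  next
    show "\<exists>C. \<forall>\<^sub>F n in at_top. \<forall>(f :: bool list \<Rightarrow> real) x.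
           x \<in> bitstrings n \<and> \<not> optimal n f x \<longrightarrow>
             p_minus K n f x \<le> 1 / (1 / (1 - c')) \<and> p_plus K n f x \<ge> real n powr (- C * real n)"
      unfolding eq by (rule exI[of _ "3"]) (rule E)
  qed
qed

end
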